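(* Let $\psi\in\mathbb{R}[x]$ be a polynomial of degree $\ge 3$ with $\psi=\psi^{(1)}\psi^{(2)}$, where $\psi^{(1)},\psi^{(2)}\in\mathbb{R}[x]$ are non-constant. If there exists a zero $x_0\in\mathbb{R}^d$ of $\psi^{(1)}$ of multiplicity $\ge 2$, then the Fischer operator $F_\psi$ is not surjective.
   Context: $\mathbb{R}[x]$ denotes the real polynomials in $d$ variables, $\Delta$ the Laplacian, and $F_\psi:\mathbb{R}[x]\to\mathbb{R}[x]$, $F_\psi(q)=\Delta(\psi q)$. The multiplicity of a zero $x_0$ of a polynomial $f$ is the largest natural number $N$ such that $\frac{\partial^\alpha}{\partial x^\alpha}f(x_0)=0$ for all $\alpha\in\mathbb{N}_0^d$ with $|\alpha|\le N-1$. *)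

theory Defs
  imports "HOL-Analysis.Analysis" "HOL-Library.Poly_Mapping"
begin

text \<open>Real polynomials in d variables, d = CARD('n), represented by their coefficients:
  a finitely supported map from monomial exponents (multi-indices of type 'n poly_mapping to nat) to reals.
  Multiplication is the convolution product of the library instance.\<close>

type_synonym 'n mpoly = "('n \<Rightarrow>\<^sub>0 nat) \<Rightarrow>\<^sub>0 real"

definition mpoly_eval :: "('n::finite) mpoly \<Rightarrow> ('n \<Rightarrow> real) \<Rightarrow> real" where
  "mpoly_eval p x = (\<Sum>\<alpha>\<in>Poly_Mapping.keys p. Poly_Mapping.lookup p \<alpha> * (\<Prod>i\<in>UNIV. x i ^ Poly_Mapping.lookup (\<alpha>::'n \<Rightarrow>\<^sub>0 nat) i))"

definition mpoly_degree :: "('n::finite) mpoly \<Rightarrow> nat" where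
  "mpoly_degree p = Max (insert 0 ((\<lambda>\<alpha>::'n \<Rightarrow>\<^sub>0 nat. \<Sum>i\<in>UNIV. Poly_Mapping.lookup \<alpha> i) ` Poly_Mapping.keys p))"

definition mpoly_pderiv :: "'n::finite \<Rightarrow> 'n mpoly \<Rightarrow> 'n mpoly" where
  "mpoly_pderiv i p =
     (\<Sum>\<alpha>\<in>Poly_Mapping.keys p. Poly_Mapping.single ((\<alpha>::'n \<Rightarrow>\<^sub>0 nat) - Poly_Mapping.single i 1)
                     (Poly_Mapping.lookup p \<alpha> * of_nat (Poly_Mapping.lookup \<alpha> i)))"

text \<open>Iterated partial derivative along a list of variables (a mixed partial
  derivative \<partial>^\<alpha> with |\<alpha>| = length of the list).\<close>
definition mpoly_pderivs :: "'n::finite list \<Rightarrow> 'n mpoly \<Rightarrow> 'n mpoly" where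
  "mpoly_pderivs is p = foldr mpoly_pderiv is p"

definition mpoly_laplacian :: "('n::finite) mpoly \<Rightarrow> 'n mpoly" where
  "mpoly_laplacian p = (\<Sum>i\<in>UNIV. mpoly_pderiv i (mpoly_pderiv i p))"

definition fischer_op :: "('n::finite) mpoly \<Rightarrow> 'n mpoly \<Rightarrow> 'n mpoly" where
  "fischer_op \<psi> q = mpoly_laplacian (\<psi> * q)"

definition vanishes_to_order :: "('n::finite) mpoly \<Rightarrow> ('n \<Rightarrow> real) \<Rightarrow> nat \<Rightarrow> bool" where
  "vanishes_to_order f x0 N \<longleftrightarrow>
     (\<forall>is::'n list. length is \<le> N - 1 \<longrightarrow> mpoly_eval (mpoly_pderivs is f) x0 = 0)"

definition zero_multiplicity :: "('n::finite) mpoly \<Rightarrow> ('n \<Rightarrow> real) \<Rightarrow> nat" where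
  "zero_multiplicity f x0 = (GREATEST N. vanishes_to_order f x0 N)"

end

theory Submission
  imports Defs "HOL-Library.Function_Algebras" "HOL-Computational_Algebra.Polynomial"
begin


context vector_space begin

lemma fd_key:
  fixes \<Phi> :: "'p::comm_ring_1 \<Rightarrow> 'b" and F :: "'p \<Rightarrow> 'p" and sc :: "'a \<Rightarrow> 'p"
  assumes \<Phi>add: "\<And>a b. \<Phi> (a+b) = \<Phi> a + \<Phi> b"
  and \<Phi>sc: "\<And>c a. \<Phi> (sc c * a) = c *s \<Phi> a"
  and Fadd: "\<And>a b. F (a+b) = F a + F b"
  and Fsc: "\<And>c a. F (sc c * a) = sc c * F a"
  and inv: "\<And>a. \<Phi> a = 0 \<Longrightarrow> \<Phi> (F a) = 0"
  and sur: "\<And>y. \<exists>x. F x = y"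
  and finS: "finite S" and rS: "range \<Phi> \<subseteq> span S"
  and v: "\<Phi> (F v) = 0"
  shows "\<Phi> v = 0"
proof (rule ccontr)
  assume nz: "\<Phi> v \<noteq> 0"
  have \<Phi>0: "\<Phi> 0 = 0" using \<Phi>add[of 0 0] by simp
  have F0: "F 0 = 0" using Fadd[of 0 0] by simp
  have \<Phi>diff: "\<Phi> (a - b) = \<Phi> a - \<Phi> b" for a b using \<Phi>add[of "a-b" b] by (simp add: algebra_simps)
  have Fdiff: "F (a - b) = F a - F b" for a b using Fadd[of "a-b" b] by (simp add: algebra_simps)
  let ?W = "range \<Phi>"
  have "independent {\<Phi> v}" using nz by simp
  then obtain B where B: "{\<Phi> v} \<subseteq> B" "B \<subseteq> ?W" "independent B" "?W \<subseteq> span B"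
    using local.maximal_independent_subset_extend[of "{\<Phi> v}" ?W] by blast
  have finB: "finite B" using local.independent_span_bound[OF finS B(3)] B(2) rS by blast
  have cardB: "card B = dim ?W" using local.basis_card_eq_dim[OF B(2) B(4) B(3)] .
  define pick where "pick b = (if b = \<Phi> v then v else (SOME p. \<Phi> p = b))" for b
  have pick: "b \<in> B \<Longrightarrow> \<Phi> (pick b) = b" for b
    using B(2) by (auto simp: pick_def intro: someI)
  define B' where "B' = (\<lambda>b. \<Phi> (F (pick b))) ` B"
  define T where "T = {y. \<exists>p. \<Phi> p = y \<and> \<Phi> (F p) \<in> span B'}"
  have "subspace T"
    unfolding subspace_def T_def
  proof (intro conjI ballI allI; (elim CollectE exE conjE)?)
    show "0 \<in> {y. \<exists>p. \<Phi> p = y \<and> \<Phi> (F p) \<in> span B'}"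
      using \<Phi>0 F0 span_zero by auto
  next
    fix x y p q assume "\<Phi> p = x" "\<Phi> (F p) \<in> span B'" "\<Phi> q = y" "\<Phi> (F q) \<in> span B'"
    then show "x + y \<in> {y. \<exists>p. \<Phi> p = y \<and> \<Phi> (F p) \<in> span B'}"
      by (auto intro!: exI[of _ "p+q"] simp: \<Phi>add Fadd span_add)
  next
    fix c x p assume "\<Phi> p = x" "\<Phi> (F p) \<in> span B'"
    then show "c *s x \<in> {y. \<exists>p. \<Phi> p = y \<and> \<Phi> (F p) \<in> span B'}"
      by (auto intro!: exI[of _ "sc c * p"] simp: \<Phi>sc Fsc span_scale)
  qed
  moreover have "B \<subseteq> T" unfolding T_def B'_def
    using pick by (auto intro!: span_base)
  ultimately have spT: "span B \<subseteq> T" by (rule local.span_minimal[rotated])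
  have WB': "?W \<subseteq> span B'"
  proof
    fix w assume "w \<in> ?W"
    then obtain u where u: "w = \<Phi> u" by auto
    obtain u' where u': "F u' = u" using sur by blast
    have "\<Phi> u' \<in> T" using spT B(4) by auto
    then obtain p where p: "\<Phi> p = \<Phi> u'" "\<Phi> (F p) \<in> span B'" unfolding T_def by auto
    have "\<Phi> (u' - p) = 0" using p \<Phi>diff by simp
    then have "\<Phi> (F (u' - p)) = 0" by (rule inv)
    then have "\<Phi> (F u') = \<Phi> (F p)" by (simp add: Fdiff \<Phi>diff)
    then show "w \<in> span B'" using u u' p by simp
  qed
  have "finite B'" unfolding B'_def using finB by simp
  moreover have "card B' \<le> dim ?W" unfolding B'_def cardB[symmetric] using finB card_image_le by blast
  moreover have z: "0 \<in> B'" unfolding B'_def using B(1) v by (auto simp: pick_def intro!: image_eqI[of _ _ "\<Phi> v"])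
  moreover have "dim ?W \<le> card (B' - {0})"
    using local.dim_le_card[of ?W "B' - {0}"] WB' \<open>finite B'\<close> by simp
  ultimately show False
    by (metis card_Diff1_less_iff leD order_trans_rules(22))
qed

end


lemma mpoly_expand:
  fixes p :: "('a \<Rightarrow>\<^sub>0 nat) \<Rightarrow>\<^sub>0 real"
  shows "p = (\<Sum>\<alpha>\<in>Poly_Mapping.keys p. Poly_Mapping.single \<alpha> (Poly_Mapping.lookup p \<alpha>))"
proof (rule poly_mapping_eqI)
  fix k
  have "(\<Sum>\<alpha>\<in>Poly_Mapping.keys p. Poly_Mapping.lookup (Poly_Mapping.single \<alpha> (Poly_Mapping.lookup p \<alpha>)) k)
     = (\<Sum>\<alpha>\<in>Poly_Mapping.keys p. if \<alpha> = k then Poly_Mapping.lookup p \<alpha> else 0)"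
    by (rule sum.cong) (auto simp: lookup_single when_def)
  also have "\<dots> = Poly_Mapping.lookup p k"
    by (simp add: in_keys_iff)
  finally show "Poly_Mapping.lookup p k = Poly_Mapping.lookup (\<Sum>\<alpha>\<in>Poly_Mapping.keys p. Poly_Mapping.single \<alpha> (Poly_Mapping.lookup p \<alpha>)) k"
    by (simp add: lookup_sum)
qed

lemma mpoly_induct[case_names zero add]:
  fixes p :: "('a \<Rightarrow>\<^sub>0 nat) \<Rightarrow>\<^sub>0 real"
  assumes "P 0" and "\<And>p \<alpha> c. P p \<Longrightarrow> P (p + Poly_Mapping.single \<alpha> c)"
  shows "P p"
proof -
  have "P (\<Sum>\<alpha>\<in>A. Poly_Mapping.single \<alpha> (g \<alpha>))" if "finite A" for A and g :: "('a \<Rightarrow>\<^sub>0 nat) \<Rightarrow> real"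
    using that
  proof (induction A rule: finite_induct)
    case empty then show ?case using assms(1) by simp
  next
    case (insert x F)
    have "P ((\<Sum>\<alpha>\<in>F. Poly_Mapping.single \<alpha> (g \<alpha>)) + Poly_Mapping.single x (g x))"
      using insert assms(2) by blast
    then show ?case using insert by (simp add: add.commute)
  qed
  then show ?thesis by (subst mpoly_expand) simp
qed

definition Lin :: "(('a \<Rightarrow>\<^sub>0 nat) \<Rightarrow> real \<Rightarrow> 'b::comm_monoid_add) \<Rightarrow> (('a \<Rightarrow>\<^sub>0 nat) \<Rightarrow>\<^sub>0 real) \<Rightarrow> 'b" where
  "Lin h p = (\<Sum>\<alpha>\<in>Poly_Mapping.keys p. h \<alpha> (Poly_Mapping.lookup p \<alpha>))"

locale addh =
  fixes h :: "('a \<Rightarrow>\<^sub>0 nat) \<Rightarrow> real \<Rightarrow> 'b::comm_monoid_add"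
  assumes h0: "h \<alpha> 0 = 0" and hadd: "h \<alpha> (a + b) = h \<alpha> a + h \<alpha> b"
begin

lemma Lin_superset: "finite A \<Longrightarrow> Poly_Mapping.keys p \<subseteq> A \<Longrightarrow> Lin h p = (\<Sum>\<alpha>\<in>A. h \<alpha> (Poly_Mapping.lookup p \<alpha>))"
  unfolding Lin_def by (rule sum.mono_neutral_left) (auto simp: h0 in_keys_iff)

lemma Lin_add: "Lin h (p + q) = Lin h p + Lin h q"
proof -
  let ?A = "Poly_Mapping.keys p \<union> Poly_Mapping.keys q"
  have "Lin h (p + q) = (\<Sum>\<alpha>\<in>?A. h \<alpha> (Poly_Mapping.lookup (p+q) \<alpha>))"
    by (rule Lin_superset) (auto simp: keys_add)
  also have "\<dots> = (\<Sum>\<alpha>\<in>?A. h \<alpha> (Poly_Mapping.lookup p \<alpha>)) + (\<Sum>\<alpha>\<in>?A. h \<alpha> (Poly_Mapping.lookup q \<alpha>))"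
    by (simp add: lookup_add hadd sum.distrib)
  also have "\<dots> = Lin h p + Lin h q"
    using Lin_superset[of ?A p] Lin_superset[of ?A q] by simp
  finally show ?thesis .
qed

lemma Lin_zero: "Lin h 0 = 0" by (simp add: Lin_def)

lemma Lin_single: "Lin h (Poly_Mapping.single \<alpha> c) = h \<alpha> c"
  by (cases "c = 0") (simp_all add: Lin_def h0)

end

lemma Lin_mult:
  fixes h :: "('a::finite \<Rightarrow>\<^sub>0 nat) \<Rightarrow> real \<Rightarrow> 'b::comm_ring"
  assumes "addh h" and hm: "\<And>\<alpha> \<beta> a b. h (\<alpha> + \<beta>) (a * b) = h \<alpha> a * h \<beta> b"
  shows "Lin h (p * q) = Lin h p * Lin h q"
proof (induction p rule: mpoly_induct)
  case zero then show ?case using addh.Lin_zero[OF assms(1)] by simp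
next
  case (add p \<alpha> c)
  have "Lin h (Poly_Mapping.single \<alpha> c * q) = h \<alpha> c * Lin h q"
  proof (induction q rule: mpoly_induct)
    case zero then show ?case using addh.Lin_zero[OF assms(1)] by simp
  next
    case (add q \<beta> d)
    then show ?case
      by (simp add: distrib_left addh.Lin_add[OF assms(1)] mult_single addh.Lin_single[OF assms(1)] hm)
  qed
  then show ?case using add
    by (simp add: distrib_right addh.Lin_add[OF assms(1)] addh.Lin_single[OF assms(1)])
qed

definition monoev :: "('n::finite \<Rightarrow>\<^sub>0 nat) \<Rightarrow> ('n \<Rightarrow> real) \<Rightarrow> real" where
  "monoev \<alpha> x = (\<Prod>i\<in>UNIV. x i ^ Poly_Mapping.lookup \<alpha> i)"

lemma eval_Lin: "mpoly_eval p x = Lin (\<lambda>\<alpha> c. c * monoev \<alpha> x) p"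
  by (simp add: mpoly_eval_def Lin_def monoev_def)

lemma addh_eval: "addh (\<lambda>\<alpha> c. c * monoev \<alpha> x)"
  by unfold_locales (simp_all add: distrib_right)

lemma eval_add: "mpoly_eval (p + q) x = mpoly_eval p x + mpoly_eval q x"
  by (simp add: eval_Lin addh.Lin_add[OF addh_eval])

lemma eval_zero[simp]: "mpoly_eval 0 x = 0"
  by (simp add: eval_Lin addh.Lin_zero[OF addh_eval])

lemma eval_single: "mpoly_eval (Poly_Mapping.single \<alpha> c) x = c * monoev \<alpha> x"
  by (simp add: eval_Lin addh.Lin_single[OF addh_eval])

lemma mono_add: "monoev (\<alpha> + \<beta>) x = monoev \<alpha> x * monoev \<beta> x"
  by (simp add: monoev_def lookup_add power_add prod.distrib)

lemma eval_mult: "mpoly_eval (p * q) x = mpoly_eval p x * mpoly_eval q x"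
  unfolding eval_Lin by (rule Lin_mult[OF addh_eval]) (simp add: mono_add)

lemma mono_zero[simp]: "monoev 0 x = 1" by (simp add: monoev_def)

lemma eval_const: "mpoly_eval (Poly_Mapping.single 0 c) x = c"
  by (simp add: eval_single)

lemma eval_sum: "mpoly_eval (sum f A) x = (\<Sum>a\<in>A. mpoly_eval (f a) x)"
  by (induction A rule: infinite_finite_induct) (auto simp: eval_add)

lemma eval_sum_list: "mpoly_eval (sum_list xs) x = sum_list (map (\<lambda>p. mpoly_eval p x) xs)"
  by (induction xs) (auto simp: eval_add)



abbreviation "e1 i \<equiv> Poly_Mapping.single i (1::nat)"

lemma pderiv_Lin: "mpoly_pderiv i p = Lin (\<lambda>\<alpha> c. Poly_Mapping.single (\<alpha> - e1 i) (c * of_nat (Poly_Mapping.lookup \<alpha> i))) p"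
  by (simp add: mpoly_pderiv_def Lin_def)

lemma addh_pderiv: "addh (\<lambda>\<alpha> c. Poly_Mapping.single (\<alpha> - e1 i) (c * of_nat (Poly_Mapping.lookup \<alpha> i)) :: ('n \<Rightarrow>\<^sub>0 nat) \<Rightarrow>\<^sub>0 real)"
  by unfold_locales (simp_all add: distrib_right single_add)

lemma pderiv_add: "mpoly_pderiv i (p + q) = mpoly_pderiv i p + mpoly_pderiv i q"
  unfolding pderiv_Lin by (rule addh.Lin_add[OF addh_pderiv])

lemma pderiv_zero[simp]: "mpoly_pderiv i 0 = 0"
  unfolding pderiv_Lin by (rule addh.Lin_zero[OF addh_pderiv])

lemma pderiv_single: "mpoly_pderiv i (Poly_Mapping.single \<alpha> c) = Poly_Mapping.single (\<alpha> - e1 i) (c * of_nat (Poly_Mapping.lookup \<alpha> i))"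
  unfolding pderiv_Lin by (rule addh.Lin_single[OF addh_pderiv])

lemma pderiv_const: "mpoly_pderiv i (Poly_Mapping.single 0 c) = 0"
  by (simp add: pderiv_single)

lemma pderiv_minus: "mpoly_pderiv i (p - q) = mpoly_pderiv i p - mpoly_pderiv i q"
  using pderiv_add[of i "p - q" q] by (simp add: algebra_simps)

lemma pderiv_sum: "mpoly_pderiv i (sum f A) = (\<Sum>a\<in>A. mpoly_pderiv i (f a))"
  by (induction A rule: infinite_finite_induct) (auto simp: pderiv_add)

lemma pderiv_sum_list: "mpoly_pderiv i (sum_list xs) = sum_list (map (mpoly_pderiv i) xs)"
  by (induction xs) (auto simp: pderiv_add)

lemma key_shift: "Poly_Mapping.lookup \<alpha> i > 0 \<Longrightarrow> \<alpha> - e1 i + \<beta> = \<alpha> + \<beta> - e1 i"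
  by (rule poly_mapping_eqI) (auto simp: lookup_add lookup_minus lookup_single when_def)

lemma key_shift2: "Poly_Mapping.lookup \<alpha> i > 0 \<Longrightarrow> \<alpha> - e1 i + e1 i = \<alpha>"
  by (rule poly_mapping_eqI) (auto simp: lookup_add lookup_minus lookup_single when_def)

lemma pderiv_mult_single:
  "mpoly_pderiv i (Poly_Mapping.single \<alpha> a * Poly_Mapping.single \<beta> b) =
   mpoly_pderiv i (Poly_Mapping.single \<alpha> a) * Poly_Mapping.single \<beta> b + Poly_Mapping.single \<alpha> a * mpoly_pderiv i (Poly_Mapping.single \<beta> b)"
proof -
  have A: "Poly_Mapping.single (\<alpha> - e1 i + \<beta>) (a * of_nat (Poly_Mapping.lookup \<alpha> i) * b)
        = Poly_Mapping.single (\<alpha> + \<beta> - e1 i) (a * b * of_nat (Poly_Mapping.lookup \<alpha> i))"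
  proof (cases "Poly_Mapping.lookup \<alpha> i = 0")
    case False then show ?thesis by (subst key_shift) (auto simp: ac_simps)
  qed simp
  have B: "Poly_Mapping.single (\<alpha> + (\<beta> - e1 i)) (a * (b * of_nat (Poly_Mapping.lookup \<beta> i)))
        = Poly_Mapping.single (\<alpha> + \<beta> - e1 i) (a * b * of_nat (Poly_Mapping.lookup \<beta> i))"
  proof (cases "Poly_Mapping.lookup \<beta> i = 0")
    case False then show ?thesis by (subst (2) add.commute, subst key_shift[symmetric]) (auto simp: ac_simps)
  qed simp
  have "mpoly_pderiv i (Poly_Mapping.single \<alpha> a) * Poly_Mapping.single \<beta> b + Poly_Mapping.single \<alpha> a * mpoly_pderiv i (Poly_Mapping.single \<beta> b)
     = Poly_Mapping.single (\<alpha> + \<beta> - e1 i) (a * b * of_nat (Poly_Mapping.lookup \<alpha> i)) + Poly_Mapping.single (\<alpha> + \<beta> - e1 i) (a * b * of_nat (Poly_Mapping.lookup \<beta> i))"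
    unfolding pderiv_single mult_single A B ..
  also have "\<dots> = Poly_Mapping.single (\<alpha> + \<beta> - e1 i) (a * b * of_nat (Poly_Mapping.lookup (\<alpha> + \<beta>) i))"
    unfolding single_add[symmetric] by (simp add: lookup_add distrib_left)
  also have "\<dots> = mpoly_pderiv i (Poly_Mapping.single \<alpha> a * Poly_Mapping.single \<beta> b)"
    unfolding mult_single pderiv_single ..
  finally show ?thesis ..
qed

lemma pderiv_mult: "mpoly_pderiv i (p * q) = mpoly_pderiv i p * q + p * mpoly_pderiv i q"
proof (induction p rule: mpoly_induct)
  case zero then show ?case by simp
next
  case (add p \<alpha> a)
  have "mpoly_pderiv i (Poly_Mapping.single \<alpha> a * q) = mpoly_pderiv i (Poly_Mapping.single \<alpha> a) * q + Poly_Mapping.single \<alpha> a * mpoly_pderiv i q"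
  proof (induction q rule: mpoly_induct)
    case zero then show ?case by simp
  next
    case (add q \<beta> b)
    then show ?case by (simp add: distrib_left pderiv_add pderiv_mult_single algebra_simps)
  qed
  then show ?case using add by (simp add: distrib_right pderiv_add algebra_simps)
qed

lemma pderiv_const_mult: "mpoly_pderiv i (Poly_Mapping.single 0 c * p) = Poly_Mapping.single 0 c * mpoly_pderiv i p"
  by (simp add: pderiv_mult pderiv_const)

lemma lookup_pderiv:
  "Poly_Mapping.lookup (mpoly_pderiv i p) \<beta> = Poly_Mapping.lookup p (\<beta> + e1 i) * of_nat (Poly_Mapping.lookup \<beta> i + 1)"
proof (induction p rule: mpoly_induct)
  case zero then show ?case by simp
next
  case (add p \<alpha> c)
  have "Poly_Mapping.lookup (Poly_Mapping.single (\<alpha> - e1 i) (c * of_nat (Poly_Mapping.lookup \<alpha> i))) \<beta>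
      = Poly_Mapping.lookup (Poly_Mapping.single \<alpha> c) (\<beta> + e1 i) * of_nat (Poly_Mapping.lookup \<beta> i + 1)"
  proof (cases "\<alpha> = \<beta> + e1 i")
    case True then show ?thesis by (simp add: lookup_add)
  next
    case False
    then have "\<alpha> - e1 i \<noteq> \<beta> \<or> Poly_Mapping.lookup \<alpha> i = 0"
      using key_shift2[of \<alpha> i] by (cases "Poly_Mapping.lookup \<alpha> i = 0") auto
    then show ?thesis using False by (auto simp: lookup_single when_def)
  qed
  then show ?case using add by (simp add: pderiv_add pderiv_single lookup_add distrib_right)
qed

lemma pderivs_Nil[simp]: "mpoly_pderivs [] p = p" by (simp add: mpoly_pderivs_def)
lemma pderivs_Cons[simp]: "mpoly_pderivs (i # is) p = mpoly_pderiv i (mpoly_pderivs is p)"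
  by (simp add: mpoly_pderivs_def)
lemma pderivs_append: "mpoly_pderivs (xs @ ys) p = mpoly_pderivs xs (mpoly_pderivs ys p)"
  by (simp add: mpoly_pderivs_def)

lemma pderivs_add: "mpoly_pderivs is (p + q) = mpoly_pderivs is p + mpoly_pderivs is q"
  by (induction "is") (simp_all add: pderiv_add)
lemma pderivs_zero[simp]: "mpoly_pderivs is 0 = 0"
  by (induction "is") simp_all
lemma pderivs_sum: "mpoly_pderivs is (sum f A) = (\<Sum>a\<in>A. mpoly_pderivs is (f a))"
  by (induction "is") (simp_all add: pderiv_sum)
lemma pderivs_sum_list: "mpoly_pderivs is (sum_list xs) = sum_list (map (mpoly_pderivs is) xs)"
  by (induction xs) (simp_all add: pderivs_add)
lemma pderivs_const_mult: "mpoly_pderivs is (Poly_Mapping.single 0 c * p) = Poly_Mapping.single 0 c * mpoly_pderivs is p"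
  by (induction "is") (simp_all add: pderiv_const_mult)

lemma pderiv_sum_pairs:
  "mpoly_pderiv i (\<Sum>(a,b)\<leftarrow>L. mpoly_pderivs a f * mpoly_pderivs b g)
   = (\<Sum>(a,b)\<leftarrow>concat (map (\<lambda>(a,b). [(i#a,b),(a,i#b)]) L). mpoly_pderivs a f * mpoly_pderivs b g)"
  by (induction L) (auto simp: pderiv_add pderiv_mult)

lemma leibniz:
  "\<exists>L. mpoly_pderivs is (f * g) = sum_list (map (\<lambda>(a,b). mpoly_pderivs a f * mpoly_pderivs b g) L)
       \<and> (\<forall>(a,b)\<in>set L. length a + length b = length is)"
proof (induction "is")
  case Nil then show ?case by (intro exI[of _ "[([],[])]"]) simp
next
  case (Cons i "is")
  then obtain L where L: "mpoly_pderivs is (f * g) = sum_list (map (\<lambda>(a,b). mpoly_pderivs a f * mpoly_pderivs b g) L)"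
    "\<forall>(a,b)\<in>set L. length a + length b = length is" by blast
  define L' where "L' = concat (map (\<lambda>(a,b). [(i#a,b),(a,i#b)]) L)"
  have "mpoly_pderivs (i#is) (f * g) = sum_list (map (\<lambda>(a,b). mpoly_pderivs a f * mpoly_pderivs b g) L')"
    unfolding L'_def using L(1) by (simp add: pderiv_sum_pairs)
  moreover have "\<forall>(a,b)\<in>set L'. length a + length b = length (i#is)"
    unfolding L'_def using L(2) by auto
  ultimately show ?case by blast
qed



lemma lap_add: "mpoly_laplacian (p + q) = mpoly_laplacian p + mpoly_laplacian q"
  by (simp add: mpoly_laplacian_def pderiv_add sum.distrib)

lemma lap_const_mult: "mpoly_laplacian (Poly_Mapping.single 0 c * p) = Poly_Mapping.single 0 c * mpoly_laplacian p"
  by (simp add: mpoly_laplacian_def pderiv_const_mult sum_distrib_left)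

lemma pderivs_lap: "mpoly_pderivs is (mpoly_laplacian p) = (\<Sum>i\<in>UNIV. mpoly_pderivs (is @ [i,i]) p)"
  by (simp add: mpoly_laplacian_def pderivs_sum pderivs_append)

lemma sum_list_zero_helper: "(\<And>x. x \<in> set xs \<Longrightarrow> f x = 0) \<Longrightarrow> sum_list (map f xs) = (0::real)"
  by (induction xs) auto

definition vz :: "nat \<Rightarrow> ('n::finite \<Rightarrow> real) \<Rightarrow> 'n mpoly \<Rightarrow> bool" where
  "vz N x0 p \<longleftrightarrow> (\<forall>is. length is < N \<longrightarrow> mpoly_eval (mpoly_pderivs is p) x0 = 0)"

lemma vz_mult:
  assumes "vz 2 x0 f" "vz N x0 g" shows "vz (N+2) x0 (f * g)"
  unfolding vz_def
proof (intro allI impI)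
  fix "is" :: "'a list" assume len: "length is < N + 2"
  obtain L where L: "mpoly_pderivs is (f * g) = sum_list (map (\<lambda>(a,b). mpoly_pderivs a f * mpoly_pderivs b g) L)"
       "\<forall>(a,b)\<in>set L. length a + length b = length is" using leibniz by blast
  have zero: "mpoly_eval (mpoly_pderivs a f * mpoly_pderivs b g) x0 = 0" if "(a,b) \<in> set L" for a b
  proof -
    have "length a < 2 \<or> length b < N" using L(2) that len by auto
    then show ?thesis using assms unfolding vz_def by (auto simp: eval_mult)
  qed
  have "sum_list (map ((\<lambda>p. mpoly_eval p x0) \<circ> (\<lambda>(a,b). mpoly_pderivs a f * mpoly_pderivs b g)) L) = 0"
    by (rule sum_list_zero_helper) (auto simp: zero)
  then show "mpoly_eval (mpoly_pderivs is (f * g)) x0 = 0"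
    unfolding L(1) eval_sum_list map_map .
qed

lemma vz_lap: "vz (N+2) x0 p \<Longrightarrow> vz N x0 (mpoly_laplacian p)"
  unfolding vz_def by (auto simp: pderivs_lap eval_sum)

fun msum :: "'n list \<Rightarrow> ('n \<Rightarrow>\<^sub>0 nat)" where
  "msum [] = 0" | "msum (i # is) = e1 i + msum is"

fun fac :: "'n list \<Rightarrow> ('n \<Rightarrow>\<^sub>0 nat) \<Rightarrow> real" where
  "fac [] \<beta> = 1" | "fac (i # is) \<beta> = fac is (\<beta> + e1 i) * of_nat (Poly_Mapping.lookup \<beta> i + 1)"

lemma fac_pos: "fac is \<beta> > 0"
  by (induction "is" arbitrary: \<beta>) auto

lemma lookup_pderivs:
  "Poly_Mapping.lookup (mpoly_pderivs is p) \<beta> = Poly_Mapping.lookup p (\<beta> + msum is) * fac is \<beta>"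
  by (induction "is" arbitrary: \<beta>) (simp_all add: lookup_pderiv add.assoc)

definition kdeg :: "('n::finite \<Rightarrow>\<^sub>0 nat) \<Rightarrow> nat" where
  "kdeg \<alpha> = (\<Sum>i\<in>UNIV. Poly_Mapping.lookup \<alpha> i)"

lemma kdeg_add: "kdeg (\<alpha> + \<beta>) = kdeg \<alpha> + kdeg \<beta>"
  by (simp add: kdeg_def lookup_add sum.distrib)

lemma kdeg_single[simp]: "kdeg (Poly_Mapping.single i n) = n"
  by (simp add: kdeg_def lookup_single when_def)

lemma kdeg_e1: "kdeg (e1 i) = 1"
  by simp

lemma kdeg_msum: "kdeg (msum is) = length is"
  by (induction "is") (simp_all add: kdeg_add kdeg_e1, simp add: kdeg_def)

lemma kdeg_0: "kdeg \<alpha> = 0 \<Longrightarrow> \<alpha> = 0"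
  by (rule poly_mapping_eqI) (simp add: kdeg_def)

lemma msum_exists: "\<exists>is. msum is = (\<alpha>::'n::finite \<Rightarrow>\<^sub>0 nat)"
proof (induction "kdeg \<alpha>" arbitrary: \<alpha>)
  case 0 then show ?case using kdeg_0[of \<alpha>] by (intro exI[of _ "[]"]) simp
next
  case (Suc n)
  then have "\<alpha> \<noteq> 0" by (auto simp: kdeg_def)
  then obtain i where i: "Poly_Mapping.lookup \<alpha> i > 0"
    by (metis gr0I poly_mapping_eqI lookup_zero)
  have "kdeg (\<alpha> - e1 i) = n"
    using Suc(2) kdeg_add[of "\<alpha> - e1 i" "e1 i"] key_shift2[OF i] kdeg_e1[of i] by simp
  then obtain js where "msum js = \<alpha> - e1 i" using Suc(1) by blast
  then show ?case using key_shift2[OF i] by (intro exI[of _ "i # js"]) (simp add: add.commute)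
qed

lemma top_deriv:
  fixes p :: "('n::finite) mpoly"
  assumes "p \<noteq> 0"
  shows "\<exists>is. length is = mpoly_degree p \<and> mpoly_eval (mpoly_pderivs is p) y \<noteq> 0"
proof -
  let ?K = "Poly_Mapping.keys p"
  have ne: "?K \<noteq> {}" using assms by simp
  define D where "D = Max (kdeg ` ?K)"
  have "D \<in> kdeg ` ?K" using Max_in[of "kdeg ` ?K"] ne unfolding D_def by auto
  then obtain \<alpha> where \<alpha>: "\<alpha> \<in> ?K" "kdeg \<alpha> = D" by auto
  have Dmax: "\<beta> \<in> ?K \<Longrightarrow> kdeg \<beta> \<le> D" for \<beta> unfolding D_def by simp
  have degD: "mpoly_degree p = D"
    unfolding mpoly_degree_def D_def[symmetric] using ne
    by (simp add: Max_insert[of "kdeg ` ?K"] D_def[symmetric] kdeg_def[symmetric])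
  obtain "is" where hs: "msum is = \<alpha>" using msum_exists by blast
  have "mpoly_pderivs is p = Poly_Mapping.single 0 (Poly_Mapping.lookup p \<alpha> * fac is 0)"
  proof (rule poly_mapping_eqI)
    fix \<beta>
    show "Poly_Mapping.lookup (mpoly_pderivs is p) \<beta> = Poly_Mapping.lookup (Poly_Mapping.single 0 (Poly_Mapping.lookup p \<alpha> * fac is 0)) \<beta>"
    proof (cases "\<beta> = 0")
      case False
      then have "kdeg \<beta> \<noteq> 0" using kdeg_0 by blast
      then have "\<beta> + \<alpha> \<notin> ?K" using Dmax[of "\<beta> + \<alpha>"] \<alpha> kdeg_add[of \<beta> \<alpha>] by auto
      then show ?thesis using False by (simp add: lookup_pderivs hs lookup_single in_keys_iff)
    qed (simp add: lookup_pderivs hs)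
  qed
  then have "mpoly_eval (mpoly_pderivs is p) y = Poly_Mapping.lookup p \<alpha> * fac is 0"
    by (simp add: eval_const)
  moreover have "Poly_Mapping.lookup p \<alpha> \<noteq> 0" using \<alpha> by (simp add: in_keys_iff)
  moreover have "fac is 0 > 0" by (rule fac_pos)
  moreover have "length is = mpoly_degree p" using kdeg_msum[of "is"] hs \<alpha> degD by simp
  ultimately show ?thesis by auto
qed



fun enc :: "nat \<Rightarrow> nat list \<Rightarrow> nat" where
  "enc B [] = 0" | "enc B (d # ds) = d + B * enc B ds"

lemma enc_add: "enc B (map (\<lambda>x. f x + g x) xs) = enc B (map f xs) + enc B (map g xs)"
  by (induction xs) (simp_all add: algebra_simps)

lemma enc_inj: "B > 0 \<Longrightarrow> length ds = length ds' \<Longrightarrow> \<forall>d\<in>set ds. d < B \<Longrightarrow> \<forall>d\<in>set ds'. d < B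
   \<Longrightarrow> enc B ds = enc B ds' \<Longrightarrow> ds = ds'"
proof (induction ds arbitrary: ds')
  case Nil then show ?case by simp
next
  case (Cons d ds ds')
  then obtain d' r' where ds': "ds' = d' # r'" by (cases ds') auto
  have eq: "d + B * enc B ds = d' + B * enc B r'" using Cons.prems ds' by simp
  have dB: "d < B" using Cons.prems(3) by simp
  have dB': "d' < B" using Cons.prems(4) ds' by simp
  have "(d + B * enc B ds) mod B = d" using dB by simp
  moreover have "(d' + B * enc B r') mod B = d'" using dB' by simp
  ultimately have dd: "d = d'" using eq by simp
  then have "enc B ds = enc B r'" using eq Cons.prems(1) by simp
  then have "ds = r'" using Cons ds' by simp
  then show ?case using dd ds' by simp
qed

lemma enc_zero: "B > 0 \<Longrightarrow> enc B ds = 0 \<Longrightarrow> d \<in> set ds \<Longrightarrow> d = 0"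
  by (induction ds) auto

lemma enc_zeros: "enc B (map (\<lambda>x. 0) xs) = 0"
  by (induction xs) auto

lemma unit_const:
  fixes p q :: "('n::finite) mpoly"
  assumes pq: "p * q = 1"
  shows "\<forall>\<alpha>\<in>Poly_Mapping.keys p. \<alpha> = 0"
proof (rule ccontr)
  assume "\<not> ?thesis"
  then obtain \<alpha>0 where a0: "\<alpha>0 \<in> Poly_Mapping.keys p" "\<alpha>0 \<noteq> 0" by auto
  obtain xs :: "'n list" where xs: "set xs = UNIV" using finite_list[of "UNIV :: 'n set"] by auto
  define B where "B = Suc (\<Sum>\<alpha>\<in>Poly_Mapping.keys p. kdeg \<alpha>)"
  have Bpos: "B > 0" by (simp add: B_def)
  have small: "Poly_Mapping.lookup \<alpha> i < B" if "\<alpha> \<in> Poly_Mapping.keys p" for \<alpha> i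
  proof -
    have "Poly_Mapping.lookup \<alpha> i \<le> kdeg \<alpha>" unfolding kdeg_def by (rule member_le_sum) auto
    also have "\<dots> \<le> (\<Sum>\<alpha>\<in>Poly_Mapping.keys p. kdeg \<alpha>)" by (rule member_le_sum) (use that in auto)
    finally show ?thesis by (simp add: B_def)
  qed
  define e where "e \<alpha> = enc B (map (Poly_Mapping.lookup \<alpha>) xs)" for \<alpha> :: "'n \<Rightarrow>\<^sub>0 nat"
  have e_add: "e (\<alpha> + \<beta>) = e \<alpha> + e \<beta>" for \<alpha> \<beta>
    unfolding e_def lookup_add by (rule enc_add)
  have e_inj: "\<alpha> = \<beta>" if "\<alpha> \<in> Poly_Mapping.keys p" "\<beta> \<in> Poly_Mapping.keys p" "e \<alpha> = e \<beta>" for \<alpha> \<beta>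
  proof -
    have "map (Poly_Mapping.lookup \<alpha>) xs = map (Poly_Mapping.lookup \<beta>) xs"
      using enc_inj[OF Bpos, of "map (Poly_Mapping.lookup \<alpha>) xs" "map (Poly_Mapping.lookup \<beta>) xs"]
        that small unfolding e_def by auto
    then have "Poly_Mapping.lookup \<alpha> i = Poly_Mapping.lookup \<beta> i" for i
      using xs by (metis UNIV_I map_eq_conv)
    then show ?thesis by (rule poly_mapping_eqI)
  qed
  have e_pos: "e \<alpha>0 \<noteq> 0"
  proof
    assume "e \<alpha>0 = 0"
    then have "Poly_Mapping.lookup \<alpha>0 i = 0" for i
      using enc_zero[OF Bpos, of "map (Poly_Mapping.lookup \<alpha>0) xs"] xs unfolding e_def by auto
    then show False using a0(2) by (metis poly_mapping_eqI lookup_zero)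
  qed
  define K where "K r = Lin (\<lambda>\<alpha> c. monom c (e \<alpha>)) r" for r :: "'n mpoly"
  have ah: "addh (\<lambda>\<alpha> c. monom c (e \<alpha>))"
    by unfold_locales (simp_all add: add_monom)
  have Kmult: "K (r * s) = K r * K s" for r s
    unfolding K_def by (rule Lin_mult[OF ah]) (simp add: mult_monom e_add)
  have m0: "map (Poly_Mapping.lookup 0) xs = map (\<lambda>_. 0::nat) xs" by simp
  have e0: "e 0 = 0" unfolding e_def by (simp only: m0 enc_zeros)
  have K1: "K 1 = 1"
    using addh.Lin_single[OF ah, of 0 1] by (simp add: K_def e0)
  have KK: "K p * K q = 1" using Kmult[of p q] pq K1 by simp
  then have "K p \<noteq> 0" "K q \<noteq> 0" by auto
  then have degp: "Polynomial.degree (K p) = 0"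
    using degree_mult_eq[of "K p" "K q"] KK by simp
  have "coeff (K p) (e \<alpha>0) = (\<Sum>\<alpha>\<in>Poly_Mapping.keys p. if e \<alpha> = e \<alpha>0 then Poly_Mapping.lookup p \<alpha> else 0)"
    by (simp add: K_def Lin_def coeff_sum)
  also have "\<dots> = (\<Sum>\<alpha>\<in>Poly_Mapping.keys p. if \<alpha> = \<alpha>0 then Poly_Mapping.lookup p \<alpha> else 0)"
    by (rule sum.cong) (use e_inj a0 in auto)
  also have "\<dots> = Poly_Mapping.lookup p \<alpha>0" using a0 by simp
  finally have "coeff (K p) (e \<alpha>0) \<noteq> 0" using a0 by (simp add: in_keys_iff)
  moreover have "coeff (K p) (e \<alpha>0) = 0"
    by (rule coeff_eq_0) (use degp e_pos in simp)
  ultimately show False by simp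
qed



lemma sum_fun_apply: "(sum f A) x = (\<Sum>a\<in>A. f a x)"
proof (induction A rule: infinite_finite_induct)
  case (insert a A) then show ?case by (simp add: plus_fun_def)
qed (simp_all add: zero_fun_def)

lemma VS: "vector_space (\<lambda>(c::real) (f::'a \<Rightarrow> real) x. c * f x)"
  by unfold_locales (simp_all add: plus_fun_def distrib_left distrib_right mult.assoc)

lemma mpoly_degree_zero: "mpoly_degree (0::('n::finite) mpoly) = 0"
  by (simp add: mpoly_degree_def)

theorem mainTheorem7:
  fixes \<psi> \<psi>1 \<psi>2 :: "('n::finite) mpoly" and x0 :: "'n \<Rightarrow> real"
  assumes "mpoly_degree \<psi> \<ge> 3"
    and "\<psi> = \<psi>1 * \<psi>2"
    and "mpoly_degree \<psi>1 \<ge> 1" and "mpoly_degree \<psi>2 \<ge> 1"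
    and "mpoly_eval \<psi>1 x0 = 0"
    and "zero_multiplicity \<psi>1 x0 \<ge> 2"
  shows "\<not> surj (fischer_op \<psi>)"
proof
  assume sur: "surj (fischer_op \<psi>)"
  define F where "F = fischer_op \<psi>1"
  have Fadd: "F (a + b) = F a + F b" for a b
    unfolding F_def fischer_op_def by (simp add: distrib_left lap_add)
  have Fsc: "F (Poly_Mapping.single 0 c * a) = Poly_Mapping.single 0 c * F a" for c a
  proof -
    have h: "\<psi>1 * (Poly_Mapping.single 0 c * a) = Poly_Mapping.single 0 c * (\<psi>1 * a)" by (simp add: ac_simps)
    show ?thesis unfolding F_def fischer_op_def h by (rule lap_const_mult)
  qed
  have Fdiff: "F (a - b) = F a - F b" for a b using Fadd[of "a - b" b] by (simp add: algebra_simps)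
  have surF: "\<exists>x. F x = y" for y
  proof -
    obtain q where "y = fischer_op \<psi> q" using sur by (metis surjD)
    then have "F (\<psi>2 * q) = y" unfolding F_def fischer_op_def assms(2) by (simp add: mult.assoc)
    then show ?thesis by blast
  qed
  have nz1: "\<psi>1 \<noteq> 0" using assms(3) mpoly_degree_zero by (metis not_one_le_zero)
  let ?P = "vanishes_to_order \<psi>1 x0"
  have P0: "?P 0" using assms(5) unfolding vanishes_to_order_def by simp
  have Pb: "y \<le> mpoly_degree \<psi>1 + 1" if "?P y" for y
  proof (rule ccontr)
    assume nb: "\<not> y \<le> mpoly_degree \<psi>1 + 1"
    obtain "is" where hs: "length is = mpoly_degree \<psi>1" "mpoly_eval (mpoly_pderivs is \<psi>1) x0 \<noteq> 0"
      using top_deriv[OF nz1] by blast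
    have "length is \<le> y - 1" using hs(1) nb by linarith
    then have "mpoly_eval (mpoly_pderivs is \<psi>1) x0 = 0" using that unfolding vanishes_to_order_def by blast
    then show False using hs(2) by simp
  qed
  have PG: "?P (Greatest ?P)" by (rule GreatestI_nat[of ?P 0, OF P0 Pb])
  have G2: "2 \<le> Greatest ?P" using assms(6) unfolding zero_multiplicity_def .
  have vz2: "vz 2 x0 \<psi>1"
    unfolding vz_def
  proof (intro allI impI)
    fix "is" :: "'n list" assume "length is < 2"
    then have "length is \<le> Greatest ?P - 1" using G2 by linarith
    then show "mpoly_eval (mpoly_pderivs is \<psi>1) x0 = 0" using PG unfolding vanishes_to_order_def by blast
  qed
  have key: "vz N x0 v" if Fv: "F v = 0" for N v
  proof -
    interpret vs: vector_space "\<lambda>(c::real) (f::'n list \<Rightarrow> real) x. c * f x" by (rule VS)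
    define \<Phi> where "\<Phi> p = (\<lambda>is. if length is < N then mpoly_eval (mpoly_pderivs is p) x0 else 0)" for p
    have \<Phi>0: "\<Phi> p = 0 \<longleftrightarrow> vz N x0 p" for p
      unfolding \<Phi>_def vz_def by (auto simp: fun_eq_iff zero_fun_def)
    have \<Phi>add: "\<Phi> (a + b) = \<Phi> a + \<Phi> b" for a b
      unfolding \<Phi>_def by (auto simp: fun_eq_iff plus_fun_def pderivs_add eval_add)
    have \<Phi>sc: "\<Phi> (Poly_Mapping.single 0 c * a) = (\<lambda>x. c * \<Phi> a x)" for c a
      unfolding \<Phi>_def by (auto simp: fun_eq_iff pderivs_const_mult eval_mult eval_const)
    have inv: "\<Phi> (F a) = 0" if "\<Phi> a = 0" for a
      using that vz_lap[OF vz_mult[OF vz2]] unfolding \<Phi>0 F_def fischer_op_def by blast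
    define L where "L = {is :: 'n list. length is < N}"
    have finL: "finite L"
      by (rule finite_subset[OF _ finite_lists_length_le[of "UNIV :: 'n set" N]]) (auto simp: L_def)
    define \<delta> where "\<delta> is = (\<lambda>js. if js = is then 1 else (0::real))" for "is" :: "'n list"
    define S where "S = \<delta> ` L"
    have finS: "finite S" using finL by (simp add: S_def)
    have rS: "range \<Phi> \<subseteq> vs.span S"
    proof
      fix w assume "w \<in> range \<Phi>"
      then obtain p where w: "w = \<Phi> p" by auto
      have "\<Phi> p = (\<Sum>is\<in>L. (\<lambda>x. \<Phi> p is * \<delta> is x))"
      proof (rule ext)
        fix js
        have "(\<Sum>is\<in>L. (\<lambda>x. \<Phi> p is * \<delta> is x)) js = (\<Sum>is\<in>L. \<Phi> p is * \<delta> is js)"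
          by (rule sum_fun_apply)
        also have "\<dots> = (\<Sum>is\<in>L. if is = js then \<Phi> p is else 0)"
          by (rule sum.cong) (auto simp: \<delta>_def)
        also have "\<dots> = \<Phi> p js"
          using finL by (auto simp: L_def \<Phi>_def)
        finally show "\<Phi> p js = (\<Sum>is\<in>L. (\<lambda>x. \<Phi> p is * \<delta> is x)) js" by simp
      qed
      also have "\<dots> \<in> vs.span S"
        by (rule vs.span_sum, rule vs.span_scale, rule vs.span_base) (auto simp: S_def)
      finally show "w \<in> vs.span S" using w by simp
    qed
    have \<Phi>Fv: "\<Phi> (F v) = 0" unfolding Fv \<Phi>0 vz_def by simp
    have "\<Phi> v = 0"
      by (rule vs.fd_key[of \<Phi> "\<lambda>c. Poly_Mapping.single 0 c" F S v, OF \<Phi>add \<Phi>sc Fadd Fsc inv surF finS rS \<Phi>Fv])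
    then show ?thesis using \<Phi>0 by blast
  qed
  have Finj: "a = 0" if "F a = 0" for a
  proof (rule ccontr)
    assume "a \<noteq> 0"
    then obtain "is" where hs: "length is = mpoly_degree a" "mpoly_eval (mpoly_pderivs is a) x0 \<noteq> 0"
      using top_deriv by blast
    have "vz (mpoly_degree a + 1) x0 a" using key that by blast
    then show False using hs unfolding vz_def by auto
  qed
  obtain q where "F 1 = fischer_op \<psi> q" using sur by (metis surjD)
  then have "F (\<psi>2 * q) = F 1" unfolding F_def fischer_op_def assms(2) by (simp add: mult.assoc)
  then have "F (\<psi>2 * q - 1) = 0" by (simp add: Fdiff)
  then have "\<psi>2 * q - 1 = 0" by (rule Finj)
  then have "\<psi>2 * q = 1" by simp
  then have allz: "\<forall>\<alpha>\<in>Poly_Mapping.keys \<psi>2. \<alpha> = 0" by (rule unit_const)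
  have "mpoly_degree \<psi>2 = 0"
  proof -
    have "(\<lambda>\<alpha>. \<Sum>i\<in>UNIV. Poly_Mapping.lookup \<alpha> i) ` Poly_Mapping.keys \<psi>2 \<subseteq> {0}"
      using allz by auto
    then have ins: "insert 0 ((\<lambda>\<alpha>. \<Sum>i\<in>UNIV. Poly_Mapping.lookup \<alpha> i) ` Poly_Mapping.keys \<psi>2) = {0}" by auto
    show ?thesis unfolding mpoly_degree_def ins by simp
  qed
  then show False using assms(4) by simp
qed

end
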